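(* A matroid $\mathsf{M}$ is isomorphic to a matroid of the form $\mathsf{U}_{0,m}\oplus\mathsf{U}_{r,s}\oplus\mathsf{U}_{\ell,\ell}$ (a uniform matroid with additional loops and coloops) if and only if $\mathsf{M}$ has no minor isomorphic to $\mathsf{T}_{2,4}$ or to $\mathsf{U}_{1,2}\oplus\mathsf{U}_{1,2}$.
   Context: $\mathsf{U}_{r,m}$ is the uniform matroid of rank $r$ on $m$ elements. $\mathsf{T}_{k,n}$ denotes the minimal matroid: the matroid on $[n]$ whose bases are the $k$-subsets $B$ with $|B\cap\{1,\dots,k\}|\ge k-1$; equivalently the cycle matroid of a cycle of length $k+1$ in which one edge is replaced by $n-k$ parallel edges. In particular $\mathsf{T}_{2,4}$ is the graphic matroid of a triangle with one edge doubled. *)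

theory Defs
  imports Main
begin

type_synonym 'a matroid = "'a set \<times> 'a set set"

definition ground :: "'a matroid \<Rightarrow> 'a set" where
  "ground M = fst M"

definition indep :: "'a matroid \<Rightarrow> 'a set set" where
  "indep M = snd M"

definition matroid :: "'a matroid \<Rightarrow> bool" where
  "matroid M \<longleftrightarrow>
     finite (ground M) \<and>
     (\<forall>X\<in>indep M. X \<subseteq> ground M) \<and>
     {} \<in> indep M \<and>
     (\<forall>X Y. Y \<in> indep M \<longrightarrow> X \<subseteq> Y \<longrightarrow> X \<in> indep M) \<and>
     (\<forall>X Y. X \<in> indep M \<longrightarrow> Y \<in> indep M \<longrightarrow> card X < card Y \<longrightarrow>
        (\<exists>y\<in>Y - X. insert y X \<in> indep M))"

definition rk :: "'a matroid \<Rightarrow> 'a set \<Rightarrow> nat" where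
  "rk M X = Max {card Y | Y. Y \<subseteq> X \<and> Y \<in> indep M}"

text \<open>The minor (M / C) \ D, for disjoint C, D contained in the ground set.
A set X \<subseteq> E - C - D is independent in M / C \ D iff r(X \<union> C) = |X| + r(C).\<close>
definition minor_by :: "'a matroid \<Rightarrow> 'a set \<Rightarrow> 'a set \<Rightarrow> 'a matroid" where
  "minor_by M C D =
     (ground M - C - D,
      {X. X \<subseteq> ground M - C - D \<and> rk M (X \<union> C) = card X + rk M C})"

definition is_minor :: "'a matroid \<Rightarrow> 'a matroid \<Rightarrow> bool" where
  "is_minor N M \<longleftrightarrow>
     (\<exists>C D. C \<subseteq> ground M \<and> D \<subseteq> ground M \<and> C \<inter> D = {} \<and> N = minor_by M C D)"

definition matroid_iso :: "'a matroid \<Rightarrow> 'b matroid \<Rightarrow> bool" where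
  "matroid_iso M N \<longleftrightarrow>
     (\<exists>f. bij_betw f (ground M) (ground N) \<and>
          (\<forall>X. X \<subseteq> ground M \<longrightarrow> (X \<in> indep M \<longleftrightarrow> f ` X \<in> indep N)))"

definition uniform :: "nat \<Rightarrow> nat \<Rightarrow> nat matroid" where
  "uniform r m = ({1..m}, {X. X \<subseteq> {1..m} \<and> card X \<le> r})"

definition minimal_matroid :: "nat \<Rightarrow> nat \<Rightarrow> nat matroid" where
  "minimal_matroid k n =
     ({1..n}, {X. \<exists>B. X \<subseteq> B \<and> B \<subseteq> {1..n} \<and> card B = k \<and>
                     card (B \<inter> {1..k}) \<ge> k - 1})"

definition direct_sum :: "'a matroid \<Rightarrow> 'b matroid \<Rightarrow> ('a + 'b) matroid" where
  "direct_sum M N =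
     (Inl ` ground M \<union> Inr ` ground N,
      {X. X \<subseteq> Inl ` ground M \<union> Inr ` ground N \<and>
          {x. Inl x \<in> X} \<in> indep M \<and> {y. Inr y \<in> X} \<in> indep N})"

end

theory Submission
  imports Defs
begin

lemma m_fin: "matroid M \<Longrightarrow> finite (ground M)" by (simp add: matroid_def)
lemma m_sub: "matroid M \<Longrightarrow> X \<in> indep M \<Longrightarrow> X \<subseteq> ground M" by (simp add: matroid_def)
lemma m_empty: "matroid M \<Longrightarrow> {} \<in> indep M" by (simp add: matroid_def)
lemma m_down: assumes "matroid M" "Y \<in> indep M" "X \<subseteq> Y" shows "X \<in> indep M"
proof -
  have "\<forall>X Y. Y \<in> indep M \<longrightarrow> X \<subseteq> Y \<longrightarrow> X \<in> indep M" using assms(1) unfolding matroid_def by simp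
  then show ?thesis using assms by blast
qed
lemma m_aug: assumes "matroid M" "X \<in> indep M" "Y \<in> indep M" "card X < card Y"
  shows "\<exists>y\<in>Y - X. insert y X \<in> indep M"
proof -
  have "\<forall>X Y. X \<in> indep M \<longrightarrow> Y \<in> indep M \<longrightarrow> card X < card Y \<longrightarrow>
        (\<exists>y\<in>Y - X. insert y X \<in> indep M)" using assms(1) unfolding matroid_def by simp
  then show ?thesis using assms by blast
qed
lemma m_ifin: "matroid M \<Longrightarrow> X \<in> indep M \<Longrightarrow> finite X"
  by (rule finite_subset[OF m_sub m_fin])

lemma rk_fin:
  assumes "finite (ground M)" "\<forall>X\<in>indep M. X \<subseteq> ground M"
  shows "finite {card Y | Y. Y \<subseteq> A \<and> Y \<in> indep M}"
proof -
  have "{card Y | Y. Y \<subseteq> A \<and> Y \<in> indep M} \<subseteq> {..card (ground M)}"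
  proof
    fix n assume "n \<in> {card Y | Y. Y \<subseteq> A \<and> Y \<in> indep M}"
    then obtain Y where "n = card Y" "Y \<in> indep M" by blast
    then show "n \<in> {..card (ground M)}" using assms card_mono by fastforce
  qed
  then show ?thesis using finite_subset by blast
qed

lemma rk_ge:
  assumes "finite (ground M)" "\<forall>X\<in>indep M. X \<subseteq> ground M" "X \<subseteq> A" "X \<in> indep M"
  shows "card X \<le> rk M A"
  unfolding rk_def using rk_fin[OF assms(1,2)] assms(3,4) by (intro Max_ge) auto

lemma rk_obt:
  assumes "finite (ground M)" "\<forall>X\<in>indep M. X \<subseteq> ground M" "{} \<in> indep M"
  shows "\<exists>Y. Y \<subseteq> A \<and> Y \<in> indep M \<and> card Y = rk M A"
proof -
  have "rk M A \<in> {card Y | Y. Y \<subseteq> A \<and> Y \<in> indep M}"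
    unfolding rk_def using rk_fin[OF assms(1,2)] assms(3) by (intro Max_in) auto
  then show ?thesis by auto
qed

lemma mrk_ge: "matroid M \<Longrightarrow> X \<subseteq> A \<Longrightarrow> X \<in> indep M \<Longrightarrow> card X \<le> rk M A"
  using rk_ge m_fin m_sub by (metis)
lemma mrk_obt: "matroid M \<Longrightarrow> \<exists>Y. Y \<subseteq> A \<and> Y \<in> indep M \<and> card Y = rk M A"
  using rk_obt[of M A] m_fin m_sub m_empty by metis

lemma rk_indep: assumes "matroid M" "X \<in> indep M" shows "rk M X = card X"
proof -
  obtain Y where Y: "Y \<subseteq> X" "Y \<in> indep M" "card Y = rk M X" using mrk_obt[OF assms(1)] by blast
  have "card Y \<le> card X" using Y(1) m_ifin[OF assms] card_mono by blast
  moreover have "card X \<le> rk M X" using mrk_ge[OF assms(1) _ assms(2)] by simp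
  ultimately show ?thesis using Y by simp
qed

lemma rk_card_indep: assumes "matroid M" "finite X" "rk M X = card X" shows "X \<in> indep M"
proof -
  obtain Y where Y: "Y \<subseteq> X" "Y \<in> indep M" "card Y = rk M X" using mrk_obt[OF assms(1)] by blast
  then have "Y = X" using card_subset_eq[OF assms(2) Y(1)] assms(3) by simp
  then show ?thesis using Y by simp
qed

lemma contract_indep:
  assumes "matroid M" "C \<in> indep M" "X \<inter> C = {}" "finite X"
  shows "rk M (X \<union> C) = card X + rk M C \<longleftrightarrow> X \<union> C \<in> indep M"
proof -
  have fC: "finite C" using m_ifin assms by blast
  have cu: "card (X \<union> C) = card X + card C" using card_Un_disjoint[OF assms(4) fC assms(3)] .
  show ?thesis
  proof
    assume "rk M (X \<union> C) = card X + rk M C"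
    then show "X \<union> C \<in> indep M" using rk_card_indep[OF assms(1)] rk_indep[OF assms(1,2)] cu fC assms(4)
      by simp
  next
    assume "X \<union> C \<in> indep M"
    then show "rk M (X \<union> C) = card X + rk M C" using rk_indep[OF assms(1)] assms(2) cu by simp
  qed
qed

lemma extend:
  assumes "matroid M" "X \<in> indep M" "Y \<in> indep M" "card X \<le> n" "n \<le> card Y"
  shows "\<exists>T. X \<subseteq> T \<and> T \<subseteq> X \<union> Y \<and> T \<in> indep M \<and> card T = n"
  using assms(2,4)
proof (induction "n - card X" arbitrary: X)
  case 0
  then show ?case by (intro exI[of _ X]) auto
next
  case (Suc k)
  then have "card X < card Y" using assms(5) by linarith
  then obtain y where y: "y \<in> Y - X" "insert y X \<in> indep M" using m_aug[OF assms(1) Suc(3) assms(3)] by blast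
  have fX: "finite X" using m_ifin[OF assms(1) Suc(3)] .
  have c: "card (insert y X) = Suc (card X)" using y fX by simp
  from Suc(1)[of "insert y X"] c Suc(2) y(2) Suc(4)
  obtain T where "insert y X \<subseteq> T" "T \<subseteq> insert y X \<union> Y" "T \<in> indep M" "card T = n"
    by (metis Suc_diff_Suc Suc_le_eq diff_Suc_1 zero_less_Suc zero_less_diff)
  then show ?case using y by (intro exI[of _ T]) auto
qed

lemma maximal_rk:
  assumes "matroid M" "J \<subseteq> A" "J \<in> indep M" "\<forall>e\<in>A - J. insert e J \<notin> indep M"
  shows "rk M A = card J"
proof -
  obtain Y where Y: "Y \<subseteq> A" "Y \<in> indep M" "card Y = rk M A" using mrk_obt[OF assms(1)] by blast
  have "\<not> card J < card Y"
  proof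
    assume "card J < card Y"
    then obtain y where "y \<in> Y - J" "insert y J \<in> indep M" using m_aug[OF assms(1,3) Y(2)] by blast
    then show False using assms(4) Y(1) by blast
  qed
  moreover have "card J \<le> rk M A" using mrk_ge[OF assms(1,2,3)] .
  ultimately show ?thesis using Y by simp
qed

lemma trans_par:
  assumes "matroid M" "insert b I \<in> indep M" "insert a (insert c I) \<in> indep M"
    "insert a (insert b I) \<notin> indep M" "a \<notin> I" "c \<notin> I" "a \<noteq> c"
  shows "insert b (insert c I) \<in> indep M"
proof (rule ccontr)
  assume nb: "insert b (insert c I) \<notin> indep M"
  have fI: "finite I" using m_ifin[OF assms(1,2)] by simp
  have "card (insert b I) < card (insert a (insert c I))"
    using fI assms(5,6,7) by (simp add: card_insert_if)
  then obtain y where y: "y \<in> insert a (insert c I) - insert b I" "insert y (insert b I) \<in> indep M"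
    using m_aug[OF assms(1,2,3)] by blast
  then have "y = a \<or> y = c" by auto
  then show False using y(2) nb assms(4) by (auto simp: insert_commute)
qed

definition ulc :: "'a matroid \<Rightarrow> 'a set \<Rightarrow> 'a set \<Rightarrow> 'a set \<Rightarrow> nat \<Rightarrow> bool" where
  "ulc M L S K r \<longleftrightarrow> finite (ground M) \<and> L \<inter> S = {} \<and> L \<inter> K = {} \<and> S \<inter> K = {} \<and>
     L \<union> S \<union> K = ground M \<and>
     (\<forall>X. X \<in> indep M \<longleftrightarrow> X \<subseteq> ground M \<and> X \<inter> L = {} \<and> card (X \<inter> S) \<le> r)"

lemma ulc_indep: "ulc M L S K r \<Longrightarrow> X \<in> indep M \<longleftrightarrow> X \<subseteq> ground M \<and> X \<inter> L = {} \<and> card (X \<inter> S) \<le> r"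
  unfolding ulc_def by blast

lemma ulc_part: assumes "ulc M L S K r"
  shows "finite (ground M)" "L \<inter> S = {}" "L \<inter> K = {}" "S \<inter> K = {}" "L \<union> S \<union> K = ground M"
  using assms unfolding ulc_def by simp_all

lemma ulc_rk:
  assumes u: "ulc M L S K r" and X: "X \<subseteq> ground M"
  shows "rk M X = card (X \<inter> K) + min r (card (X \<inter> S))"
proof -
  note p = ulc_part[OF u]
  have fin: "finite (ground M)" using p by simp
  have sub: "\<forall>X\<in>indep M. X \<subseteq> ground M" using ulc_indep[OF u] by simp
  have emp: "{} \<in> indep M" using ulc_indep[OF u] by simp
  have fX: "finite X" using X fin finite_subset by blast
  obtain Y where Y: "Y \<subseteq> X" "Y \<in> indep M" "card Y = rk M X" using rk_obt[OF fin sub emp] by blast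
  have YL: "Y \<inter> L = {}" "card (Y \<inter> S) \<le> r" using Y(2) ulc_indep[OF u] by simp_all
  have fY: "finite Y" using Y(1) fX finite_subset by blast
  have "Y \<subseteq> (Y \<inter> K) \<union> (Y \<inter> S)" using YL Y(1) X p(5) by blast
  then have "card Y \<le> card ((Y \<inter> K) \<union> (Y \<inter> S))" using fY by (intro card_mono) auto
  also have "\<dots> \<le> card (Y \<inter> K) + card (Y \<inter> S)" by (rule card_Un_le)
  finally have c1: "card Y \<le> card (Y \<inter> K) + card (Y \<inter> S)" .
  have "card (Y \<inter> K) \<le> card (X \<inter> K)" by (rule card_mono) (use fX Y(1) in auto)
  moreover have "card (Y \<inter> S) \<le> card (X \<inter> S)" by (rule card_mono) (use fX Y(1) in auto)
  ultimately have le: "rk M X \<le> card (X \<inter> K) + min r (card (X \<inter> S))" using Y(3) YL c1 by linarith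
  obtain Z where Z: "Z \<subseteq> X \<inter> S" "card Z = min r (card (X \<inter> S))" "finite Z"
    by (rule obtain_subset_with_card_n[OF min.cobounded2[of r "card (X \<inter> S)"]])
  let ?W = "(X \<inter> K) \<union> Z"
  have dis: "(X \<inter> K) \<inter> Z = {}" using Z p(4) by blast
  have "?W \<inter> S = Z" using Z p(4) by blast
  moreover have "?W \<inter> L = {}" using Z p(2,3) by blast
  moreover have "?W \<subseteq> ground M" using Z X by blast
  ultimately have "?W \<in> indep M" using ulc_indep[OF u] Z by simp
  moreover have "card ?W = card (X \<inter> K) + min r (card (X \<inter> S))"
    using card_Un_disjoint[OF _ Z(3) dis] fX Z(2) by simp
  moreover have "?W \<subseteq> X" using Z by blast
  ultimately have "card (X \<inter> K) + min r (card (X \<inter> S)) \<le> rk M X"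
    using rk_ge[OF fin sub, of ?W X] by simp
  then show ?thesis using le by simp
qed

lemma arith1: fixes xk ck r xs cs xl :: nat shows
 "(xk + ck + min r (xs + cs) = xl + xs + xk + (ck + min r cs)) \<longleftrightarrow> (xl = 0 \<and> xs \<le> r - cs)"
  by (cases "r \<le> cs"; cases "r \<le> xs + cs") (auto simp: min_def)

lemma card_split3:
  assumes "finite X" "L \<inter> S = {}" "L \<inter> K = {}" "S \<inter> K = {}" "X \<subseteq> L \<union> S \<union> K"
  shows "card X = card (X \<inter> L) + card (X \<inter> S) + card (X \<inter> K)"
proof -
  have "X = (X \<inter> L) \<union> (X \<inter> S) \<union> (X \<inter> K)" using assms by blast
  then have "card X = card ((X \<inter> L) \<union> (X \<inter> S) \<union> (X \<inter> K))" by simp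
  also have "\<dots> = card ((X \<inter> L) \<union> (X \<inter> S)) + card (X \<inter> K)"
    by (rule card_Un_disjoint) (use assms in auto)
  also have "card ((X \<inter> L) \<union> (X \<inter> S)) = card (X \<inter> L) + card (X \<inter> S)"
    by (rule card_Un_disjoint) (use assms in auto)
  finally show ?thesis .
qed

lemma ulc_minor:
  assumes u: "ulc M L S K r" and C: "C \<subseteq> ground M" and D: "D \<subseteq> ground M" and CD: "C \<inter> D = {}"
  shows "ulc (minor_by M C D) (L - C - D) (S - C - D) (K - C - D) (r - card (C \<inter> S))"
proof -
  have fin: "finite (ground M)" using ulc_part[OF u] by simp
  have part: "L \<inter> S = {}" "L \<inter> K = {}" "S \<inter> K = {}" "L \<union> S \<union> K = ground M"
    using ulc_part[OF u] by simp_all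
  have gm: "ground (minor_by M C D) = ground M - C - D" by (simp add: minor_by_def ground_def)
  have im: "indep (minor_by M C D) = {X. X \<subseteq> ground M - C - D \<and> rk M (X \<union> C) = card X + rk M C}"
    by (simp add: minor_by_def indep_def)
  have key: "rk M (X \<union> C) = card X + rk M C \<longleftrightarrow> X \<inter> (L - C - D) = {} \<and> card (X \<inter> (S - C - D)) \<le> r - card (C \<inter> S)"
    if X: "X \<subseteq> ground M - C - D" for X
  proof -
    have fX: "finite X" using X fin finite_subset by blast
    have fC: "finite C" using C fin finite_subset by blast
    have XC: "X \<inter> C = {}" using X by blast
    have XCg: "X \<union> C \<subseteq> ground M" using X C by blast
    have r1: "rk M (X \<union> C) = card ((X \<union> C) \<inter> K) + min r (card ((X \<union> C) \<inter> S))"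
      by (rule ulc_rk[OF u XCg])
    have r2: "rk M C = card (C \<inter> K) + min r (card (C \<inter> S))" using ulc_rk[OF u C] .
    have e1: "card ((X \<union> C) \<inter> K) = card (X \<inter> K) + card (C \<inter> K)"
    proof -
      have "(X \<union> C) \<inter> K = (X \<inter> K) \<union> (C \<inter> K)" by blast
      moreover have "card ((X \<inter> K) \<union> (C \<inter> K)) = card (X \<inter> K) + card (C \<inter> K)"
        by (rule card_Un_disjoint) (use XC fX fC in auto)
      ultimately show ?thesis by simp
    qed
    have e2: "card ((X \<union> C) \<inter> S) = card (X \<inter> S) + card (C \<inter> S)"
    proof -
      have "(X \<union> C) \<inter> S = (X \<inter> S) \<union> (C \<inter> S)" by blast
      moreover have "card ((X \<inter> S) \<union> (C \<inter> S)) = card (X \<inter> S) + card (C \<inter> S)"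
        by (rule card_Un_disjoint) (use XC fX fC in auto)
      ultimately show ?thesis by simp
    qed
    have "X \<subseteq> L \<union> S \<union> K" using X part(4) by blast
    then have e3: "card X = card (X \<inter> L) + card (X \<inter> S) + card (X \<inter> K)"
      using card_split3[OF fX part(1,2,3)] by simp
    have e4: "X \<inter> (L - C - D) = X \<inter> L" "X \<inter> (S - C - D) = X \<inter> S" using X by blast+
    have e5: "X \<inter> L = {} \<longleftrightarrow> card (X \<inter> L) = 0" using fX by simp
    show ?thesis unfolding r1 r2 e1 e2 e3 e4 e5 by (rule arith1)
  qed
  show ?thesis unfolding ulc_def
  proof (intro conjI)
    show "finite (ground (minor_by M C D))" using gm fin by simp
    show "\<forall>X. (X \<in> indep (minor_by M C D)) =
        (X \<subseteq> ground (minor_by M C D) \<and> X \<inter> (L - C - D) = {} \<and> card (X \<inter> (S - C - D)) \<le> r - card (C \<inter> S))"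
      using key unfolding im gm by blast
    show "(L - C - D) \<inter> (S - C - D) = {}" using part by blast
    show "(L - C - D) \<inter> (K - C - D) = {}" using part by blast
    show "(S - C - D) \<inter> (K - C - D) = {}" using part by blast
    show "(L - C - D) \<union> (S - C - D) \<union> (K - C - D) = ground (minor_by M C D)" unfolding gm using part(4) by blast
  qed
qed

lemma card_le1_two: fixes Z :: "'b set" assumes "Z \<subseteq> {p, q}" "p \<noteq> q"
  shows "card Z \<le> 1 \<longleftrightarrow> \<not> (p \<in> Z \<and> q \<in> Z)"
proof
  assume c: "card Z \<le> 1"
  show "\<not> (p \<in> Z \<and> q \<in> Z)"
  proof
    assume "p \<in> Z \<and> q \<in> Z"
    then have "Z = {p, q}" using assms(1) by blast
    then show False using c assms(2) by simp
  qed
next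
  assume n: "\<not> (p \<in> Z \<and> q \<in> Z)"
  then have "Z \<subseteq> {p} \<or> Z \<subseteq> {q}" using assms(1) by blast
  then show "card Z \<le> 1"
  proof
    assume "Z \<subseteq> {p}" then show ?thesis using card_mono[of "{p}" Z] by simp
  next
    assume "Z \<subseteq> {q}" then show ?thesis using card_mono[of "{q}" Z] by simp
  qed
qed

lemma four: "{1..4::nat} = {1,2,3,4}" by auto
lemma two: "{1..2::nat} = {1,2}" by auto

lemma T24_indep:
  "X \<in> indep (minimal_matroid 2 4) \<longleftrightarrow> X \<subseteq> {1..4} \<and> card X \<le> 2 \<and> X \<noteq> {3,4}"
proof
  assume "X \<in> indep (minimal_matroid 2 4)"
  then obtain B where B: "X \<subseteq> B" "B \<subseteq> {1..4}" "card B = 2" "card (B \<inter> {1..2}) \<ge> 1"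
    by (auto simp: minimal_matroid_def indep_def)
  have fB: "finite B" using B(2) finite_subset by blast
  have c: "card X \<le> 2" using card_mono[OF fB B(1)] B(3) by simp
  have "X \<noteq> {3,4}"
  proof
    assume X: "X = {3,4}"
    then have "card X = card B" using B(3) by simp
    then have "X = B" using card_subset_eq[OF fB B(1)] by simp
    then have "B \<inter> {1..2} = {}" using X by auto
    then show False using B(4) by simp
  qed
  then show "X \<subseteq> {1..4} \<and> card X \<le> 2 \<and> X \<noteq> {3,4}" using B(1,2) c by blast
next
  assume A: "X \<subseteq> {1..4} \<and> card X \<le> 2 \<and> X \<noteq> {3,4}"
  have fX: "finite X" using A finite_subset by blast
  show "X \<in> indep (minimal_matroid 2 4)"
  proof (cases "card X = 2")
    case True
    have "X \<inter> {1..2} \<noteq> {}"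
    proof
      assume "X \<inter> {1..2} = {}"
      then have "X \<subseteq> {3,4}" using A unfolding four two by blast
      moreover have "card {3,4::nat} = card X" using True by simp
      ultimately have "X = {3,4}" using card_subset_eq[of "{3,4::nat}" X] by simp
      then show False using A by simp
    qed
    then have "card (X \<inter> {1..2}) \<ge> 1" using fX
      by (metis One_nat_def Suc_leI card_gt_0_iff finite_Int)
    then show ?thesis using A True by (auto simp: minimal_matroid_def indep_def)
  next
    case False
    then have c1: "card X \<le> 1" using A by simp
    show ?thesis
    proof (cases "X \<subseteq> {1,2}")
      case True
      then show ?thesis by (auto simp: minimal_matroid_def indep_def intro!: exI[of _ "{1,2}"])
    next
      case F2: False
      then obtain z where z: "z \<in> X" "z \<notin> {1,2}" by blast
      have "\<forall>a\<in>X. \<forall>b\<in>X. a = b" using c1 fX card_le_Suc0_iff_eq[of X] by simp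
      then have "X = {z}" using z(1) by blast
      moreover have "z \<in> {3,4}" using z A by auto
      ultimately show ?thesis by (auto simp: minimal_matroid_def indep_def intro!: exI[of _ "{1,z}"])
    qed
  qed
qed

lemma U2_ground: "ground (direct_sum (uniform 1 2) (uniform 1 2)) = {Inl 1, Inl 2, Inr 1, Inr 2}"
  by (auto simp: direct_sum_def uniform_def ground_def)

lemma U2_indep:
  "X \<in> indep (direct_sum (uniform 1 2) (uniform 1 2)) \<longleftrightarrow>
    X \<subseteq> {Inl 1, Inl 2, Inr 1, Inr 2} \<and> \<not> (Inl 1 \<in> X \<and> Inl 2 \<in> X) \<and> \<not> (Inr 1 \<in> X \<and> Inr 2 \<in> X)"
proof -
  have g: "Inl ` {1..2::nat} \<union> Inr ` {1..2::nat} = {Inl 1, Inl 2, Inr 1, Inr 2}" by auto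
  have i: "indep (direct_sum (uniform 1 2) (uniform 1 2)) =
     {X. X \<subseteq> {Inl 1, Inl 2, Inr 1, Inr 2} \<and> {x. Inl x \<in> X} \<subseteq> {1,2} \<and> card {x. Inl x \<in> X} \<le> 1
          \<and> {y. Inr y \<in> X} \<subseteq> {1,2} \<and> card {y. Inr y \<in> X} \<le> 1}"
    unfolding direct_sum_def uniform_def indep_def ground_def g by (simp add: atLeastAtMost_iff) (auto)
  show ?thesis
  proof
    assume "X \<in> indep (direct_sum (uniform 1 2) (uniform 1 2))"
    then have h: "X \<subseteq> {Inl 1, Inl 2, Inr 1, Inr 2}" "{x. Inl x \<in> X} \<subseteq> {1,2}" "card {x. Inl x \<in> X} \<le> 1"
       "{y. Inr y \<in> X} \<subseteq> {1,2}" "card {y. Inr y \<in> X} \<le> 1" unfolding i by blast+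
    have "\<not> (1 \<in> {x. Inl x \<in> X} \<and> 2 \<in> {x. Inl x \<in> X})" using card_le1_two[OF h(2)] h(3) by simp
    moreover have "\<not> (1 \<in> {y. Inr y \<in> X} \<and> 2 \<in> {y. Inr y \<in> X})" using card_le1_two[OF h(4)] h(5) by simp
    ultimately show "X \<subseteq> {Inl 1, Inl 2, Inr 1, Inr 2} \<and> \<not> (Inl 1 \<in> X \<and> Inl 2 \<in> X) \<and> \<not> (Inr 1 \<in> X \<and> Inr 2 \<in> X)"
      using h(1) by simp
  next
    assume h: "X \<subseteq> {Inl 1, Inl 2, Inr 1, Inr 2} \<and> \<not> (Inl 1 \<in> X \<and> Inl 2 \<in> X) \<and> \<not> (Inr 1 \<in> X \<and> Inr 2 \<in> X)"
    have s1: "{x. Inl x \<in> X} \<subseteq> {1,2}" "{y. Inr y \<in> X} \<subseteq> {1,2}" using h by auto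
    have "card {x. Inl x \<in> X} \<le> 1" using card_le1_two[OF s1(1)] h by simp
    moreover have "card {y. Inr y \<in> X} \<le> 1" using card_le1_two[OF s1(2)] h by simp
    ultimately show "X \<in> indep (direct_sum (uniform 1 2) (uniform 1 2))" unfolding i using h s1 by blast
  qed
qed

lemma form_ground:
  "ground (direct_sum (direct_sum (uniform 0 m) (uniform r s)) (uniform l l)) =
    Inl ` Inl ` {1..m} \<union> Inl ` Inr ` {1..s} \<union> Inr ` {1..l}"
  by (auto simp: direct_sum_def uniform_def ground_def)

lemma form_ulc:
  "ulc (direct_sum (direct_sum (uniform 0 m) (uniform r s)) (uniform l l))
     (Inl ` Inl ` {1..m}) (Inl ` Inr ` {1..s}) (Inr ` {1..l}) r"
proof -
  let ?F = "direct_sum (direct_sum (uniform 0 m) (uniform r s)) (uniform l l)"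
  let ?G = "Inl ` Inl ` {1..m} \<union> Inl ` Inr ` {1..s} \<union> Inr ` {1..l}"
  have key: "X \<in> indep ?F \<longleftrightarrow> X \<subseteq> ?G \<and> X \<inter> Inl ` Inl ` {1..m} = {} \<and> card (X \<inter> Inl ` Inr ` {1..s}) \<le> r"
    for X
  proof -
    have i: "X \<in> indep ?F \<longleftrightarrow> X \<subseteq> ?G \<and> {z. Inl (Inl z) \<in> X} \<subseteq> {1..m} \<and> card {z. Inl (Inl z) \<in> X} = 0
       \<and> {z. Inl (Inr z) \<in> X} \<subseteq> {1..s} \<and> card {z. Inl (Inr z) \<in> X} \<le> r
       \<and> {z. Inr z \<in> X} \<subseteq> {1..l} \<and> card {z. Inr z \<in> X} \<le> l"
      unfolding direct_sum_def uniform_def indep_def ground_def by auto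
    have a1: "X \<subseteq> ?G \<Longrightarrow> {z. Inl (Inl z) \<in> X} \<subseteq> {1..m} \<and> {z. Inl (Inr z) \<in> X} \<subseteq> {1..s} \<and> {z. Inr z \<in> X} \<subseteq> {1..l}"
      by auto
    have a2: "{z. Inr z \<in> X} \<subseteq> {1..l} \<Longrightarrow> card {z. Inr z \<in> X} \<le> l"
      using card_mono[of "{1..l}" "{z. Inr z \<in> X}"] by simp
    have a3: "{z. Inl (Inl z) \<in> X} \<subseteq> {1..m} \<Longrightarrow> card {z. Inl (Inl z) \<in> X} = 0 \<longleftrightarrow> X \<inter> Inl ` Inl ` {1..m} = {}"
    proof -
      assume sm: "{z. Inl (Inl z) \<in> X} \<subseteq> {1..m}"
      then have "finite {z. Inl (Inl z) \<in> X}" using finite_subset by blast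
      then show ?thesis using sm by auto
    qed
    have a4: "X \<inter> Inl ` Inr ` {1..s} = (\<lambda>z. Inl (Inr z)) ` {z. Inl (Inr z) \<in> X}" if "X \<subseteq> ?G"
      using that by auto
    have a5: "card ((\<lambda>z. Inl (Inr z)) ` {z. Inl (Inr z) \<in> X}) = card {z. Inl (Inr z) \<in> X}"
      by (rule card_image) (auto simp: inj_on_def)
    show ?thesis using i a1 a2 a3 a4 a5 by metis
  qed
  show ?thesis unfolding ulc_def form_ground using key by auto
qed

lemma ulc_iso:
  assumes u: "ulc M L S K r" and t: "ulc T L' S' K' r" and f: "bij_betw f (ground M) (ground T)"
    and fL: "f ` L = L'" and fS: "f ` S = S'"
  shows "matroid_iso M T"
  unfolding matroid_iso_def
proof (intro exI conjI allI impI)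
  show "bij_betw f (ground M) (ground T)" by (rule f)
  fix X assume X: "X \<subseteq> ground M"
  have inj: "inj_on f (ground M)" using bij_betw_imp_inj_on[OF f] .
  have pM: "L \<subseteq> ground M" "S \<subseteq> ground M" using ulc_part(5)[OF u] by blast+
  have e1: "f ` X \<inter> L' = f ` (X \<inter> L)" unfolding fL[symmetric]
    by (rule inj_on_image_Int[OF inj X pM(1), symmetric])
  have e2: "f ` X \<inter> S' = f ` (X \<inter> S)" unfolding fS[symmetric]
    by (rule inj_on_image_Int[OF inj X pM(2), symmetric])
  have e3: "card (f ` (X \<inter> S)) = card (X \<inter> S)"
    by (rule card_image) (rule inj_on_subset[OF inj], use X in blast)
  have e4: "f ` X \<subseteq> ground T" using bij_betw_imp_surj_on[OF f] X by blast
  show "X \<in> indep M \<longleftrightarrow> f ` X \<in> indep T"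
    unfolding ulc_indep[OF u, of X] ulc_indep[OF t, of "f ` X"] e1 e2 e3 using X e4 by simp
qed

lemma ulc_transport:
  assumes m: "matroid M" and iso: "matroid_iso M T" and t: "ulc T L S K r"
  shows "\<exists>L S K. ulc M L S K r"
proof -
  obtain f where f: "bij_betw f (ground M) (ground T)"
    and fi: "\<And>X. X \<subseteq> ground M \<Longrightarrow> X \<in> indep M \<longleftrightarrow> f ` X \<in> indep T"
    using iso unfolding matroid_iso_def by blast
  have inj: "inj_on f (ground M)" and im: "f ` ground M = ground T" using bij_betw_imp_inj_on[OF f] bij_betw_imp_surj_on[OF f] by simp_all
  note p = ulc_part[OF t]
  let ?E = "ground M"
  let ?L = "?E \<inter> f -` L" and ?S = "?E \<inter> f -` S" and ?K = "?E \<inter> f -` K"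
  have key: "X \<in> indep M \<longleftrightarrow> X \<subseteq> ?E \<and> X \<inter> ?L = {} \<and> card (X \<inter> ?S) \<le> r" for X
  proof (cases "X \<subseteq> ?E")
    case False
    then show ?thesis using m_sub[OF m] by blast
  next
    case X: True
    have e1: "f ` X \<inter> L = {} \<longleftrightarrow> X \<inter> ?L = {}" using X by blast
    have e2: "f ` X \<inter> S = f ` (X \<inter> ?S)" using X by blast
    have e3: "card (f ` (X \<inter> ?S)) = card (X \<inter> ?S)"
      by (rule card_image) (rule inj_on_subset[OF inj], blast)
    have e4: "f ` X \<subseteq> ground T" using X im by blast
    show ?thesis unfolding fi[OF X] ulc_indep[OF t, of "f ` X"] e1 e2 e3 using X e4 by simp
  qed
  have part: "?L \<inter> ?S = {}" "?L \<inter> ?K = {}" "?S \<inter> ?K = {}" using p by blast+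
  have un: "?L \<union> ?S \<union> ?K = ?E" using p(5) im by blast
  have "ulc M ?L ?S ?K r" unfolding ulc_def using m_fin[OF m] part un key by blast
  then show ?thesis by blast
qed

lemma ulc_single:
  assumes u: "ulc N L S K r" and x: "{x} \<in> indep N"
  shows "x \<in> ground N" "x \<notin> L" "x \<in> S \<Longrightarrow> 1 \<le> r"
  using x unfolding ulc_indep[OF u] by (auto split: if_splits)

lemma ulc_par:
  assumes u: "ulc N L S K r" and xy: "x \<noteq> y" and x: "{x} \<in> indep N" and y: "{y} \<in> indep N"
    and d: "{x, y} \<notin> indep N"
  shows "x \<in> S \<and> y \<in> S \<and> r = 1"
proof -
  have g: "{x,y} \<subseteq> ground N" "x \<notin> L" "y \<notin> L" using ulc_single[OF u x] ulc_single[OF u y] by auto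
  then have c: "r < card ({x,y} \<inter> S)" using d unfolding ulc_indep[OF u] by auto
  have cx: "x \<in> S \<Longrightarrow> 1 \<le> r" and cy: "y \<in> S \<Longrightarrow> 1 \<le> r"
    using ulc_single[OF u x] ulc_single[OF u y] by auto
  show ?thesis
  proof (cases "x \<in> S")
    case True
    show ?thesis
    proof (cases "y \<in> S")
      case True
      then have "{x,y} \<inter> S = {x,y}" using `x \<in> S` by auto
      then show ?thesis using `x \<in> S` `y \<in> S` c cx xy by simp
    next
      case False
      then have "{x,y} \<inter> S = {x}" using True by auto
      then have "card ({x,y} \<inter> S) = 1" by simp
      moreover have "1 \<le> r" using cx True by simp
      ultimately show ?thesis using c by simp
    qed
  next
    case False
    then have "{x,y} \<inter> S \<subseteq> {y}" by auto
    then have "card ({x,y} \<inter> S) \<le> 1" using card_mono[of "{y}"] by fastforce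
    moreover have "card ({x,y} \<inter> S) \<le> r" proof (cases "y \<in> S")
      case True then have "{x,y} \<inter> S = {y}" using False by auto
      then show ?thesis using cy True by simp
    next
      case F: False then have "{x,y} \<inter> S = {}" using False by auto
      then show ?thesis by simp
    qed
    then show ?thesis using c by simp
  qed
qed

lemma ulc_side:
  assumes u: "ulc N L S K r" and r: "r = 1" and x: "x \<in> S" and xz: "x \<noteq> z" and i: "{x, z} \<in> indep N"
  shows "z \<in> K"
proof -
  have h: "{x,z} \<subseteq> ground N" "{x,z} \<inter> L = {}" "card ({x,z} \<inter> S) \<le> 1" using i unfolding ulc_indep[OF u] r by auto
  have "z \<notin> S"
  proof
    assume "z \<in> S" then have "{x,z} \<inter> S = {x,z}" using x by auto
    then show False using h(3) xz by simp
  qed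
  then show ?thesis using h ulc_part(5)[OF u] by auto
qed

lemma ulc_tri:
  assumes u: "ulc N L S K r" and r: "r = 1" and a: "a \<in> K" "b \<in> K" and c: "c \<in> S"
  shows "{a, b, c} \<in> indep N"
proof -
  note p = ulc_part[OF u]
  have "{a,b,c} \<inter> S = {c}" using a c p(4) by auto
  moreover have "{a,b,c} \<inter> L = {}" using a c p(2,3) by auto
  moreover have "{a,b,c} \<subseteq> ground N" using a c p(5) by auto
  ultimately show ?thesis unfolding ulc_indep[OF u] r by simp
qed

lemma iso_inv:
  assumes "matroid_iso N T"
  obtains f where "bij_betw f (ground N) (ground T)"
    "\<And>X. X \<subseteq> ground N \<Longrightarrow> X \<in> indep N \<longleftrightarrow> f ` X \<in> indep T"
  using assms unfolding matroid_iso_def by blast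

lemma neq_by: "x \<in> B \<Longrightarrow> x \<notin> A \<Longrightarrow> A \<noteq> B" by blast

lemma ulc_noT24:
  assumes u: "ulc N L S K r"
  shows "\<not> matroid_iso N (minimal_matroid 2 4)"
proof
  assume "matroid_iso N (minimal_matroid 2 4)"
  then obtain f where f0: "bij_betw f (ground N) (ground (minimal_matroid 2 4))"
    and fi: "\<And>X. X \<subseteq> ground N \<Longrightarrow> X \<in> indep N \<longleftrightarrow> f ` X \<in> indep (minimal_matroid 2 4)"
    using \<open>matroid_iso N (minimal_matroid 2 4)\<close> unfolding matroid_iso_def by blast
  have "ground (minimal_matroid 2 4) = {1,2,3,4}" unfolding minimal_matroid_def ground_def four by simp
  then have f: "bij_betw f (ground N) {1,2,3,4}" using f0 by simp
  let ?g = "inv_into (ground N) f"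
  have gi: "?g i \<in> ground N" "f (?g i) = i" if "i \<in> {1,2,3,4}" for i
    using f that by (auto simp: bij_betw_def inv_into_into f_inv_into_f)
  define u1 u2 u3 u4 where "u1 = ?g 1" "u2 = ?g 2" "u3 = ?g 3" "u4 = ?g 4"
  have g: "u1 \<in> ground N" "u2 \<in> ground N" "u3 \<in> ground N" "u4 \<in> ground N"
    "f u1 = 1" "f u2 = 2" "f u3 = 3" "f u4 = 4" unfolding u1_u2_u3_u4_def using gi by auto
  have d: "u1 \<noteq> u2" "u1 \<noteq> u3" "u2 \<noteq> u3" "u3 \<noteq> u4" using g by force+
  have T: "Y \<in> indep (minimal_matroid 2 4) \<longleftrightarrow> Y \<subseteq> {1,2,3,4} \<and> card Y \<le> 2 \<and> Y \<noteq> {3,4}" for Y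
    using T24_indep four by simp
  have ne: "{1,3} \<noteq> {3,4::nat}" "{2,3} \<noteq> {3,4::nat}" "{3} \<noteq> {3,4::nat}"
    by (rule neq_by[of 4]; simp)+
  have ne2: "{4} \<noteq> {3,4::nat}" by (rule neq_by[of 3]; simp)
  have i3: "{u3} \<in> indep N" using fi[of "{u3}"] g T ne by simp
  have i4: "{u4} \<in> indep N" using fi[of "{u4}"] g T ne2 by simp
  have d34: "{u3, u4} \<notin> indep N" using fi[of "{u3,u4}"] g T by simp
  have i13: "{u3, u1} \<in> indep N" using fi[of "{u3,u1}"] g T ne by (simp add: insert_commute)
  have i23: "{u3, u2} \<in> indep N" using fi[of "{u3,u2}"] g T ne by (simp add: insert_commute)
  have d123: "{u1, u2, u3} \<notin> indep N" using fi[of "{u1,u2,u3}"] g T by simp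
  have p: "u3 \<in> S \<and> u4 \<in> S \<and> r = 1" using ulc_par[OF u d(4) i3 i4 d34] .
  have "u1 \<in> K" using ulc_side[OF u _ _ _ i13] p d by auto
  moreover have "u2 \<in> K" using ulc_side[OF u _ _ _ i23] p d by auto
  ultimately have "{u1, u2, u3} \<in> indep N" using ulc_tri[OF u] p by blast
  then show False using d123 by simp
qed

lemma ulc_noU:
  assumes u: "ulc N L S K r"
  shows "\<not> matroid_iso N (direct_sum (uniform 1 2) (uniform 1 2))"
proof
  assume "matroid_iso N (direct_sum (uniform 1 2) (uniform 1 2))"
  then obtain f where f0: "bij_betw f (ground N) (ground (direct_sum (uniform 1 2) (uniform 1 2)))"
    and fi: "\<And>X. X \<subseteq> ground N \<Longrightarrow> X \<in> indep N \<longleftrightarrow> f ` X \<in> indep (direct_sum (uniform 1 2) (uniform 1 2))"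
    using \<open>matroid_iso N (direct_sum (uniform 1 2) (uniform 1 2))\<close> unfolding matroid_iso_def by blast
  have f: "bij_betw f (ground N) {Inl 1, Inl 2, Inr 1, Inr 2}" using f0 U2_ground by simp
  let ?g = "inv_into (ground N) f"
  have gi: "?g i \<in> ground N" "f (?g i) = i" if "i \<in> {Inl 1, Inl 2, Inr 1, Inr 2}" for i
    using f that by (auto simp: bij_betw_def inv_into_into f_inv_into_f)
  define u1 u2 u3 u4 where "u1 = ?g (Inl 1)" "u2 = ?g (Inl 2)" "u3 = ?g (Inr 1)" "u4 = ?g (Inr 2)"
  have g: "u1 \<in> ground N" "u2 \<in> ground N" "u3 \<in> ground N" "u4 \<in> ground N"
    "f u1 = Inl 1" "f u2 = Inl 2" "f u3 = Inr 1" "f u4 = Inr 2" unfolding u1_u2_u3_u4_def using gi by auto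
  have d: "u1 \<noteq> u2" "u1 \<noteq> u3" "u3 \<noteq> u4" using g by force+
  have i1: "{u1} \<in> indep N" using fi[of "{u1}"] g U2_indep by simp
  have i2: "{u2} \<in> indep N" using fi[of "{u2}"] g U2_indep by simp
  have i3: "{u3} \<in> indep N" using fi[of "{u3}"] g U2_indep by simp
  have i4: "{u4} \<in> indep N" using fi[of "{u4}"] g U2_indep by simp
  have d12: "{u1, u2} \<notin> indep N" using fi[of "{u1,u2}"] g U2_indep by simp
  have d34: "{u3, u4} \<notin> indep N" using fi[of "{u3,u4}"] g U2_indep by simp
  have i13: "{u1, u3} \<in> indep N" using fi[of "{u1,u3}"] g U2_indep by simp
  have p1: "u1 \<in> S \<and> r = 1" using ulc_par[OF u d(1) i1 i2 d12] by simp
  have p2: "u3 \<in> S" using ulc_par[OF u d(3) i3 i4 d34] by simp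
  have "u3 \<in> K" using ulc_side[OF u _ _ d(2) i13] p1 by simp
  then show False using p2 ulc_part(4)[OF u] by blast
qed

definition lpset :: "'a matroid \<Rightarrow> 'a set" where
  "lpset M = {e \<in> ground M. {e} \<notin> indep M}"
definition colpset :: "'a matroid \<Rightarrow> 'a set" where
  "colpset M = {e \<in> ground M. {e} \<in> indep M \<and> rk M (ground M - {e}) < rk M (ground M)}"
definition mid :: "'a matroid \<Rightarrow> 'a set" where
  "mid M = ground M - lpset M - colpset M"

lemma coloop_lemma:
  assumes m: "matroid M" and X: "X \<in> indep M"
  shows "X \<union> colpset M \<in> indep M"
proof -
  obtain Y where Y: "Y \<subseteq> ground M" "Y \<in> indep M" "card Y = rk M (ground M)" using mrk_obt[OF m] by blast
  have XE: "X \<subseteq> ground M" using m_sub[OF m X] .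
  have "card X \<le> rk M (ground M)" using mrk_ge[OF m XE X] .
  then obtain T where T: "X \<subseteq> T" "T \<subseteq> X \<union> Y" "T \<in> indep M" "card T = rk M (ground M)"
    using extend[OF m X Y(2), of "rk M (ground M)"] Y(3) by auto
  have TE: "T \<subseteq> ground M" using T(2) XE Y(1) by blast
  have "colpset M \<subseteq> T"
  proof
    fix k assume k: "k \<in> colpset M"
    show "k \<in> T"
    proof (rule ccontr)
      assume "k \<notin> T"
      then have "T \<subseteq> ground M - {k}" using TE by blast
      then have "card T \<le> rk M (ground M - {k})" using mrk_ge[OF m _ T(3)] by blast
      moreover have "rk M (ground M - {k}) < rk M (ground M)" using k unfolding colpset_def by blast
      ultimately show False using T(4) by simp
    qed
  qed
  then have "X \<union> colpset M \<subseteq> T" using T(1) by blast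
  then show ?thesis using m_down[OF m T(3)] by blast
qed

lemma indep_no_loop: "matroid M \<Longrightarrow> X \<in> indep M \<Longrightarrow> X \<inter> lpset M = {}"
  unfolding lpset_def using m_down by blast

lemma claimA:
  assumes m: "matroid M" and h: "\<forall>Y. Y \<subseteq> mid M \<and> card Y \<le> rk M (mid M) \<longrightarrow> Y \<in> indep M"
  shows "ulc M (lpset M) (mid M) (colpset M) (rk M (mid M))"
proof -
  have key: "X \<in> indep M \<longleftrightarrow> X \<subseteq> ground M \<and> X \<inter> lpset M = {} \<and> card (X \<inter> mid M) \<le> rk M (mid M)" for X
  proof
    assume X: "X \<in> indep M"
    have "X \<inter> mid M \<in> indep M" using m_down[OF m X] by blast
    then have "card (X \<inter> mid M) \<le> rk M (mid M)" using mrk_ge[OF m] by blast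
    then show "X \<subseteq> ground M \<and> X \<inter> lpset M = {} \<and> card (X \<inter> mid M) \<le> rk M (mid M)"
      using m_sub[OF m X] indep_no_loop[OF m X] by blast
  next
    assume X: "X \<subseteq> ground M \<and> X \<inter> lpset M = {} \<and> card (X \<inter> mid M) \<le> rk M (mid M)"
    then have "X \<inter> mid M \<in> indep M" using h by blast
    then have i: "(X \<inter> mid M) \<union> colpset M \<in> indep M" using coloop_lemma[OF m] by blast
    have "X \<subseteq> (X \<inter> mid M) \<union> colpset M" using X unfolding mid_def by blast
    then show "X \<in> indep M" using m_down[OF m i] by blast
  qed
  have p: "lpset M \<inter> mid M = {}" "lpset M \<inter> colpset M = {}" "mid M \<inter> colpset M = {}"
    "lpset M \<union> mid M \<union> colpset M = ground M"
    unfolding mid_def lpset_def colpset_def by blast+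
  show ?thesis unfolding ulc_def using p key m_fin[OF m] by blast
qed

lemma min_dep:
  assumes m: "matroid M" and f: "finite Y" and Y: "Y \<notin> indep M"
  shows "\<exists>C. C \<subseteq> Y \<and> C \<notin> indep M \<and> (\<forall>x\<in>C. C - {x} \<in> indep M)"
  using f Y
proof (induction "card Y" arbitrary: Y rule: less_induct)
  case less
  show ?case
  proof (cases "\<forall>x\<in>Y. Y - {x} \<in> indep M")
    case True
    then show ?thesis using less.prems by blast
  next
    case False
    then obtain x where x: "x \<in> Y" "Y - {x} \<notin> indep M" by blast
    have "card (Y - {x}) < card Y" using x(1) less.prems(1) by (meson card_Diff1_less)
    then obtain C where "C \<subseteq> Y - {x}" "C \<notin> indep M" "\<forall>x\<in>C. C - {x} \<in> indep M"
      using less.hyps[of "Y - {x}"] less.prems(1) x(2) by blast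
    then show ?thesis by blast
  qed
qed

definition pat :: "'a matroid \<Rightarrow> 'a set \<Rightarrow> 'a \<Rightarrow> 'a \<Rightarrow> 'a \<Rightarrow> 'a \<Rightarrow> bool" where
  "pat M I a b c d \<longleftrightarrow> I \<in> indep M \<and> {a,b,c,d} \<subseteq> ground M \<and> {a,b,c,d} \<inter> I = {} \<and>
     a \<noteq> b \<and> a \<noteq> c \<and> a \<noteq> d \<and> b \<noteq> c \<and> b \<noteq> d \<and> c \<noteq> d \<and>
     insert a (insert b I) \<notin> indep M \<and> insert a (insert c I) \<in> indep M \<and>
     insert a (insert d I) \<in> indep M \<and> insert b (insert c I) \<in> indep M \<and>
     insert b (insert d I) \<in> indep M \<and>
     (\<forall>X. X \<subseteq> {a,b,c,d} \<and> 3 \<le> card X \<longrightarrow> X \<union> I \<notin> indep M)"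

lemma mid_sub: "mid M \<subseteq> ground M" unfolding mid_def by blast
lemma mid_single: "x \<in> mid M \<Longrightarrow> {x} \<in> indep M" unfolding mid_def lpset_def by blast

lemma claimB:
  assumes m: "matroid M" and Y: "Y \<subseteq> mid M" "card Y \<le> rk M (mid M)" "Y \<notin> indep M"
  shows "\<exists>I a b c d. pat M I a b c d"
proof -
  let ?E = "ground M" and ?S = "mid M" and ?r = "rk M (mid M)"
  have fE: "finite ?E" using m_fin[OF m] .
  have SE: "?S \<subseteq> ?E" by (rule mid_sub)
  have fS: "finite ?S" using finite_subset[OF SE fE] .
  have fY: "finite Y" using finite_subset[OF Y(1) fS] .
  obtain C0 where C0: "C0 \<subseteq> Y" "C0 \<notin> indep M" "\<forall>x\<in>C0. C0 - {x} \<in> indep M"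
    using min_dep[OF m fY Y(3)] by blast
  have fC0: "finite C0" using finite_subset[OF C0(1) fY] .
  have C0S: "C0 \<subseteq> ?S" using C0(1) Y(1) by blast
  have cC0: "card C0 \<le> ?r" using card_mono[OF fY C0(1)] Y(2) by simp
  have "C0 \<noteq> {}" using C0(2) m_empty[OF m] by auto
  then obtain a where a: "a \<in> C0" by blast
  have "a \<in> mid M" using a C0S by blast
  then have "{a} \<in> indep M" by (rule mid_single)
  then have "C0 \<noteq> {a}" using C0(2) by auto
  then obtain b where b: "b \<in> C0" "b \<noteq> a" using a by blast
  define J where "J = C0 - {a, b}"
  have aJ': "insert a J = C0 - {b}" unfolding J_def using a b by blast
  have bJ': "insert b J = C0 - {a}" unfolding J_def using a b by blast
  have aJi: "insert a J \<in> indep M" unfolding aJ' using C0(3) b(1) by blast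
  have bJi: "insert b J \<in> indep M" unfolding bJ' using C0(3) a by blast
  have abJ: "insert a (insert b J) = C0" unfolding J_def using a b by blast
  have fJ: "finite J" unfolding J_def using fC0 by simp
  have aJn: "a \<notin> J" "b \<notin> J" unfolding J_def by blast+
  have "card (insert a (insert b J)) = card J + 2" using aJn fJ b(2) by simp
  then have cJ: "card C0 = card J + 2" using abJ by simp
  have r2: "2 \<le> ?r" using cC0 cJ by simp
  obtain Bs where Bs: "Bs \<subseteq> ?S" "Bs \<in> indep M" "card Bs = ?r" using mrk_obt[OF m, of "mid M"] by blast
  have caJ: "card (insert a J) = card J + 1" using aJn fJ by simp
  have cbJ: "card (insert b J) = card J + 1" using aJn fJ by simp
  obtain B1 where B1: "insert a J \<subseteq> B1" "B1 \<subseteq> insert a J \<union> Bs" "B1 \<in> indep M" "card B1 = ?r"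
  proof -
    have c1: "card (insert a J) \<le> ?r" using caJ cJ cC0 by simp
    have c2: "?r \<le> card Bs" using Bs(3) by simp
    show ?thesis using extend[OF m aJi Bs(2) c1 c2] that by blast
  qed
  obtain T where T: "insert b J \<subseteq> T" "T \<subseteq> insert b J \<union> B1" "T \<in> indep M" "card T = ?r - 1"
  proof -
    have c1: "card (insert b J) \<le> ?r - 1" using cbJ cJ cC0 by simp
    have c2: "?r - 1 \<le> card B1" using B1(4) by simp
    show ?thesis using extend[OF m bJi B1(3) c1 c2] that by blast
  qed
  have aT: "a \<notin> T"
  proof
    assume "a \<in> T" then have "C0 \<subseteq> T" using T(1) abJ by blast
    then show False using m_down[OF m T(3)] C0(2) by blast
  qed
  have bB1: "b \<notin> B1"
  proof
    assume "b \<in> B1" then have "C0 \<subseteq> B1" using B1(1) abJ by blast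
    then show False using m_down[OF m B1(3)] C0(2) by blast
  qed
  define I where "I = T - {b}"
  have bT: "b \<in> T" using T(1) by blast
  have fT: "finite T" using m_ifin[OF m T(3)] .
  have IB1: "insert a I \<subseteq> B1" unfolding I_def using T(2) B1(1) aT by blast
  have B1S: "B1 \<subseteq> ?S" using B1(2) Bs(1) aJ' C0S by blast
  have aI: "insert a I \<in> indep M" using m_down[OF m B1(3) IB1] .
  have bI: "insert b I \<in> indep M" unfolding I_def using T(3) bT by (simp add: insert_absorb)
  have JI: "J \<subseteq> I" unfolding I_def using T(1) aJn by blast
  have abI: "insert a (insert b I) \<notin> indep M"
  proof
    assume "insert a (insert b I) \<in> indep M"
    moreover have "C0 \<subseteq> insert a (insert b I)" using abJ JI by blast
    ultimately show False using m_down[OF m] C0(2) by blast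
  qed
  have anI: "a \<notin> I" "b \<notin> I" unfolding I_def using aT by blast+
  have fI: "finite I" unfolding I_def using fT by simp
  have cI: "card I + 2 = ?r" unfolding I_def using T(4) bT fT r2 by (simp add: card_Diff_singleton)
  have IS: "I \<subseteq> ?S" using IB1 B1S by blast
  define P where "P = insert a I"
  have cP: "card P < card Bs" unfolding P_def using cI anI fI Bs(3) by simp
  have Pi: "P \<in> indep M" unfolding P_def by (rule aI)
  obtain y where y: "y \<in> Bs - P" "insert y P \<in> indep M" using m_aug[OF m Pi Bs(2) cP] by blast
  have yb: "y \<noteq> b"
  proof
    assume "y = b" then have "insert a (insert b I) \<in> indep M" using y(2) unfolding P_def by (simp add: insert_commute)
    then show False using abI by simp
  qed
  have yS: "y \<in> ?S" using y(1) Bs(1) by blast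
  have triples: "X \<union> I \<notin> indep M" if X: "X \<subseteq> ?S" "X \<inter> I = {}" "3 \<le> card X" for X
  proof
    assume i: "X \<union> I \<in> indep M"
    have "X \<union> I \<subseteq> ?S" using X IS by blast
    then have "card (X \<union> I) \<le> ?r" using mrk_ge[OF m _ i] by blast
    moreover have "finite X" using finite_subset[OF X(1) fS] .
    then have "card (X \<union> I) = card X + card I" using card_Un_disjoint[OF _ fI X(2)] by simp
    ultimately show False using X(3) cI by simp
  qed
  show ?thesis
  proof (cases "\<exists>z\<in>?S - P. z \<noteq> y \<and> insert z P \<in> indep M")
    case True
    then obtain z where z: "z \<in> ?S" "z \<notin> P" "z \<noteq> y" "insert z P \<in> indep M" by blast
    have zb: "z \<noteq> b"
    proof
      assume "z = b" then have "insert a (insert b I) \<in> indep M" using z(4) unfolding P_def by (simp add: insert_commute)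
      then show False using abI by simp
    qed
    have ay: "a \<noteq> y" "y \<notin> I" using y(1) unfolding P_def by blast+
    have az: "a \<noteq> z" "z \<notin> I" using z(2) unfolding P_def by blast+
    have acI: "insert a (insert y I) \<in> indep M" using y(2) unfolding P_def by (simp add: insert_commute)
    have adI: "insert a (insert z I) \<in> indep M" using z(4) unfolding P_def by (simp add: insert_commute)
    have bcI: "insert b (insert y I) \<in> indep M" by (rule trans_par[OF m bI acI abI anI(1) ay(2) ay(1)])
    have bdI: "insert b (insert z I) \<in> indep M" by (rule trans_par[OF m bI adI abI anI(1) az(2) az(1)])
    have abS: "a \<in> ?S" "b \<in> ?S" using a b(1) C0S by blast+
    have "pat M I a b y z" unfolding pat_def
    proof (intro conjI allI impI)
      show "I \<in> indep M" using m_down[OF m bI] by blast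
      show "{a, b, y, z} \<subseteq> ground M" using abS yS z(1) SE by blast
      show "{a, b, y, z} \<inter> I = {}" using anI ay az by blast
      fix X assume X: "X \<subseteq> {a, b, y, z} \<and> 3 \<le> card X"
      then show "X \<union> I \<notin> indep M" using triples[of X] abS yS z(1) anI ay az by blast
    qed (use b(2) ay az yb zb z(3) abI acI adI bcI bdI in auto)
    then show ?thesis by blast
  next
    case False
    have abS: "a \<in> ?S" using a C0S by blast
    have PS: "P \<subseteq> ?S - {y}" unfolding P_def using IS abS y(1) unfolding P_def by blast
    have mx: "\<forall>e\<in>(?S - {y}) - P. insert e P \<notin> indep M" using False by blast
    have rSy: "rk M (?S - {y}) = card P" by (rule maximal_rk[OF m PS Pi mx])
    have cP': "card P + 1 = ?r" unfolding P_def using cI anI fI by simp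
    have ynot: "\<not> rk M (?E - {y}) < rk M ?E" using yS unfolding mid_def colpset_def lpset_def by blast
    let ?K = "colpset M"
    have fK: "finite ?K" using finite_subset[of ?K ?E] fE unfolding colpset_def by blast
    obtain Z where Z: "Z \<subseteq> ?E - {y}" "Z \<in> indep M" "card Z = rk M (?E - {y})"
      using mrk_obt[OF m, of "?E - {y}"] by blast
    have fZ: "finite Z" using m_ifin[OF m Z(2)] .
    have ZL: "Z \<inter> lpset M = {}" using indep_no_loop[OF m Z(2)] .
    have "Z \<subseteq> (Z \<inter> (?S - {y})) \<union> ?K" using Z(1) ZL unfolding mid_def by blast
    then have "card Z \<le> card ((Z \<inter> (?S - {y})) \<union> ?K)" using fZ fK by (intro card_mono) auto
    also have "\<dots> \<le> card (Z \<inter> (?S - {y})) + card ?K" by (rule card_Un_le)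
    also have "card (Z \<inter> (?S - {y})) \<le> rk M (?S - {y})"
    proof -
      have "Z \<inter> (?S - {y}) \<in> indep M" using m_down[OF m Z(2)] by blast
      then show ?thesis using mrk_ge[OF m] by blast
    qed
    finally have up: "rk M (?E - {y}) \<le> ?r - 1 + card ?K" using Z(3) rSy cP' by simp
    have BK: "Bs \<union> ?K \<in> indep M" using coloop_lemma[OF m Bs(2)] .
    have dBK: "Bs \<inter> ?K = {}" using Bs(1) unfolding mid_def by blast
    have fBs: "finite Bs" using m_ifin[OF m Bs(2)] .
    have "card (Bs \<union> ?K) = ?r + card ?K" using card_Un_disjoint[OF fBs fK dBK] Bs(3) by simp
    moreover have "Bs \<union> ?K \<subseteq> ?E" using m_sub[OF m BK] .
    ultimately have "?r + card ?K \<le> rk M ?E" using mrk_ge[OF m _ BK] by metis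
    then show ?thesis using up ynot r2 by simp
  qed
qed

lemma cross4:
  assumes "X \<subseteq> {a,b,c,d}" "\<not> (a \<in> X \<and> b \<in> X)" "\<not> (c \<in> X \<and> d \<in> X)"
  shows "X \<subseteq> {a,c} \<or> X \<subseteq> {a,d} \<or> X \<subseteq> {b,c} \<or> X \<subseteq> {b,d}"
  using assms by blast

lemma card_le2: assumes "X \<subseteq> {p, q}" shows "card X \<le> 2"
proof -
  have "card {p,q} \<le> 2" by (cases "p = q") simp_all
  moreover have "card X \<le> card {p,q}" using card_mono[of "{p,q}" X] assms by simp
  ultimately show ?thesis by simp
qed

lemma pat_D: assumes "pat M I a b c d"
  shows "I \<in> indep M" "{a,b,c,d} \<subseteq> ground M" "{a,b,c,d} \<inter> I = {}"
     "a \<noteq> b" "a \<noteq> c" "a \<noteq> d" "b \<noteq> c" "b \<noteq> d" "c \<noteq> d"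
     "insert a (insert b I) \<notin> indep M" "insert a (insert c I) \<in> indep M"
     "insert a (insert d I) \<in> indep M" "insert b (insert c I) \<in> indep M"
     "insert b (insert d I) \<in> indep M"
     "\<And>X. X \<subseteq> {a,b,c,d} \<Longrightarrow> 3 \<le> card X \<Longrightarrow> X \<union> I \<notin> indep M"
  using assms unfolding pat_def by blast+

lemma pat_char:
  assumes m: "matroid M" and p: "pat M I a b c d" and X: "X \<subseteq> {a,b,c,d}"
  shows "X \<union> I \<in> indep M \<longleftrightarrow> \<not> (a \<in> X \<and> b \<in> X) \<and> card X \<le> 2 \<and>
           (\<not> (c \<in> X \<and> d \<in> X) \<or> insert c (insert d I) \<in> indep M)"
proof
  note pp = pat_D[OF p]
  assume i: "X \<union> I \<in> indep M"
  have "\<not> (a \<in> X \<and> b \<in> X)"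
  proof
    assume "a \<in> X \<and> b \<in> X"
    then have "insert a (insert b I) \<subseteq> X \<union> I" by blast
    then show False using m_down[OF m i, of "insert a (insert b I)"] pp(10) by simp
  qed
  moreover have "card X \<le> 2"
  proof (rule ccontr)
    assume "\<not> card X \<le> 2"
    then have "3 \<le> card X" by simp
    then show False using pp(15)[OF X] i by blast
  qed
  moreover have "\<not> (c \<in> X \<and> d \<in> X) \<or> insert c (insert d I) \<in> indep M"
  proof (cases "c \<in> X \<and> d \<in> X")
    case True
    then have "insert c (insert d I) \<subseteq> X \<union> I" by blast
    then show ?thesis using m_down[OF m i, of "insert c (insert d I)"] by simp
  qed simp
  ultimately show "\<not> (a \<in> X \<and> b \<in> X) \<and> card X \<le> 2 \<and> (\<not> (c \<in> X \<and> d \<in> X) \<or> insert c (insert d I) \<in> indep M)"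
    by blast
next
  note pp = pat_D[OF p]
  assume h: "\<not> (a \<in> X \<and> b \<in> X) \<and> card X \<le> 2 \<and> (\<not> (c \<in> X \<and> d \<in> X) \<or> insert c (insert d I) \<in> indep M)"
  show "X \<union> I \<in> indep M"
  proof (cases "c \<in> X \<and> d \<in> X")
    case True
    have fX: "finite X" using finite_subset[OF X] by simp
    have cd: "{c,d} \<subseteq> X" using True by blast
    have "card {c,d} = 2" using pp(9) by simp
    then have "card {c,d} = card X" using h card_mono[OF fX cd] by simp
    then have "X = {c,d}" using card_subset_eq[OF fX cd] by simp
    then show ?thesis using h True by simp
  next
    case False
    then have "X \<subseteq> {a,c} \<or> X \<subseteq> {a,d} \<or> X \<subseteq> {b,c} \<or> X \<subseteq> {b,d}" using cross4[OF X] h by blast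
    moreover have "{a,c} \<union> I \<in> indep M" "{a,d} \<union> I \<in> indep M" "{b,c} \<union> I \<in> indep M" "{b,d} \<union> I \<in> indep M"
      using pp(11-14) by simp_all
    ultimately show ?thesis
    proof (elim disjE)
      assume "X \<subseteq> {a,c}" then have "X \<union> I \<subseteq> {a,c} \<union> I" by blast
      then show ?thesis using m_down[OF m \<open>{a,c} \<union> I \<in> indep M\<close>] by simp
    next
      assume "X \<subseteq> {a,d}" then have "X \<union> I \<subseteq> {a,d} \<union> I" by blast
      then show ?thesis using m_down[OF m \<open>{a,d} \<union> I \<in> indep M\<close>] by simp
    next
      assume "X \<subseteq> {b,c}" then have "X \<union> I \<subseteq> {b,c} \<union> I" by blast
      then show ?thesis using m_down[OF m \<open>{b,c} \<union> I \<in> indep M\<close>] by simp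
    next
      assume "X \<subseteq> {b,d}" then have "X \<union> I \<subseteq> {b,d} \<union> I" by blast
      then show ?thesis using m_down[OF m \<open>{b,d} \<union> I \<in> indep M\<close>] by simp
    qed
  qed
qed

lemma img_iff: assumes "X \<subseteq> Q" "\<forall>x\<in>Q. f x = v \<longleftrightarrow> x = a" shows "v \<in> f ` X \<longleftrightarrow> a \<in> X"
proof
  assume "v \<in> f ` X" then obtain x where x: "x \<in> X" "f x = v" by blast
  then have "x \<in> Q" using assms(1) by blast
  then have "x = a" using assms(2) x(2) by blast
  then show "a \<in> X" using x(1) by simp
next
  assume "a \<in> X" then have "f a = v" using assms by blast
  then show "v \<in> f ` X" using \<open>a \<in> X\<close> by blast
qed

lemma pat_minor:
  assumes m: "matroid M" and p: "pat M I a b c d"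
  shows "\<exists>N. is_minor N M \<and> (matroid_iso N (minimal_matroid 2 4) \<or> matroid_iso N (direct_sum (uniform 1 2) (uniform 1 2)))"
proof -
  note pp = pat_D[OF p]
  let ?Q = "{a,b,c,d}" and ?E = "ground M"
  define D where "D = ?E - I - ?Q"
  define N where "N = minor_by M I D"
  have IE: "I \<subseteq> ?E" using m_sub[OF m pp(1)] .
  have QE: "?Q \<subseteq> ?E" "?Q \<inter> I = {}" using pp(2,3) by blast+
  have DE: "D \<subseteq> ?E" "I \<inter> D = {}" unfolding D_def by blast+
  have mn: "is_minor N M" unfolding is_minor_def
    by (intro exI[of _ I] exI[of _ D] conjI IE DE N_def)
  have "ground N = ?E - I - D" unfolding N_def minor_by_def by (simp add: ground_def)
  then have gN: "ground N = ?Q" unfolding D_def using QE by blast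
  have iN: "X \<in> indep N \<longleftrightarrow> X \<subseteq> ?Q \<and> X \<union> I \<in> indep M" if X: "X \<subseteq> ?Q" for X
  proof -
    have fX: "finite X" using finite_subset[OF X] by simp
    have XI: "X \<inter> I = {}" using X QE by blast
    have "indep N = {X. X \<subseteq> ?E - I - D \<and> rk M (X \<union> I) = card X + rk M I}"
      unfolding N_def minor_by_def by (simp add: indep_def)
    moreover have "?E - I - D = ?Q" unfolding D_def using QE by blast
    ultimately have "X \<in> indep N \<longleftrightarrow> rk M (X \<union> I) = card X + rk M I" using X by simp
    also have "\<dots> \<longleftrightarrow> X \<union> I \<in> indep M"
      by (rule contract_indep[OF m pp(1) XI fX])
    finally show ?thesis using X by blast
  qed
  have fQ: "finite ?Q" by simp
  show ?thesis
  proof (cases "insert c (insert d I) \<in> indep M")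
    case True
    define f where "f = (\<lambda>x. if x = a then 3 else if x = b then 4 else if x = c then 1 else (2::nat))"
    have fv: "f a = 3" "f b = 4" "f c = 1" "f d = 2" unfolding f_def using pp(4-9) by auto
    have inj: "inj_on f ?Q" unfolding inj_on_def using fv by auto
    have im: "f ` ?Q = {1..4}" using fv four by auto
    have bij: "bij_betw f (ground N) (ground (minimal_matroid 2 4))"
      unfolding gN bij_betw_def using inj im by (simp add: minimal_matroid_def ground_def)
    have "matroid_iso N (minimal_matroid 2 4)" unfolding matroid_iso_def
    proof (intro exI conjI allI impI)
      show "bij_betw f (ground N) (ground (minimal_matroid 2 4))" by (rule bij)
      fix X assume X0: "X \<subseteq> ground N"
      then have X: "X \<subseteq> ?Q" using gN by simp
      have fX: "finite X" using finite_subset[OF X] by simp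
      have c: "card (f ` X) = card X" by (rule card_image[OF inj_on_subset[OF inj X]])
      have s: "f ` X \<subseteq> {1..4}" using X im by blast
      have e: "f ` X = {3,4} \<longleftrightarrow> X = {a,b}"
      proof -
        have "f ` {a,b} = {3,4}" using fv by simp
        moreover have "f ` X = f ` {a,b} \<longleftrightarrow> X = {a,b}" by (rule inj_on_image_eq_iff[OF inj X]) blast
        ultimately show ?thesis by simp
      qed
      have ab: "card X \<le> 2 \<Longrightarrow> X = {a,b} \<longleftrightarrow> a \<in> X \<and> b \<in> X"
      proof
        assume "a \<in> X \<and> b \<in> X" and c2: "card X \<le> 2"
        then have s2: "{a,b} \<subseteq> X" by blast
        have "card {a,b} = 2" using pp(4) by simp
        then have "card {a,b} = card X" using c2 card_mono[OF fX s2] by simp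
        then show "X = {a,b}" using card_subset_eq[OF fX s2] by simp
      qed simp
      show "X \<in> indep N \<longleftrightarrow> f ` X \<in> indep (minimal_matroid 2 4)"
        unfolding iN[OF X] T24_indep pat_char[OF m p X] c using X s e ab True by blast
    qed
    then show ?thesis using mn by blast
  next
    case False
    define f where "f = (\<lambda>x. if x = a then Inl 1 else if x = b then Inl 2 else if x = c then Inr 1 else (Inr (2::nat) :: nat + nat))"
    have fv: "f a = Inl 1" "f b = Inl 2" "f c = Inr 1" "f d = Inr 2" unfolding f_def using pp(4-9) by auto
    have fv2: "\<forall>x\<in>?Q. (f x = Inl 1 \<longleftrightarrow> x = a) \<and> (f x = Inl 2 \<longleftrightarrow> x = b) \<and> (f x = Inr 1 \<longleftrightarrow> x = c) \<and> (f x = Inr 2 \<longleftrightarrow> x = d)"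
      using pp(4-9) unfolding f_def by auto
    have inj: "inj_on f ?Q" unfolding inj_on_def using fv by auto
    have im: "f ` ?Q = {Inl 1, Inl 2, Inr 1, Inr 2}" using fv by auto
    have bij: "bij_betw f (ground N) (ground (direct_sum (uniform 1 2) (uniform 1 2)))"
      unfolding gN bij_betw_def U2_ground using inj im by simp
    have "matroid_iso N (direct_sum (uniform 1 2) (uniform 1 2))" unfolding matroid_iso_def
    proof (intro exI conjI allI impI)
      show "bij_betw f (ground N) (ground (direct_sum (uniform 1 2) (uniform 1 2)))" by (rule bij)
      fix X assume X0: "X \<subseteq> ground N"
      then have X: "X \<subseteq> ?Q" using gN by simp
      have s: "f ` X \<subseteq> {Inl 1, Inl 2, Inr 1, Inr 2}" using X im by blast
      have m1: "Inl 1 \<in> f ` X \<longleftrightarrow> a \<in> X" "Inl 2 \<in> f ` X \<longleftrightarrow> b \<in> X"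
               "Inr 1 \<in> f ` X \<longleftrightarrow> c \<in> X" "Inr 2 \<in> f ` X \<longleftrightarrow> d \<in> X"
      proof -
        have h: "\<forall>x\<in>?Q. f x = Inl 1 \<longleftrightarrow> x = a" "\<forall>x\<in>?Q. f x = Inl 2 \<longleftrightarrow> x = b"
             "\<forall>x\<in>?Q. f x = Inr 1 \<longleftrightarrow> x = c" "\<forall>x\<in>?Q. f x = Inr 2 \<longleftrightarrow> x = d"
          using pp(4-9) unfolding f_def by auto
        show "Inl 1 \<in> f ` X \<longleftrightarrow> a \<in> X" by (rule img_iff[OF X h(1)])
        show "Inl 2 \<in> f ` X \<longleftrightarrow> b \<in> X" by (rule img_iff[OF X h(2)])
        show "Inr 1 \<in> f ` X \<longleftrightarrow> c \<in> X" by (rule img_iff[OF X h(3)])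
        show "Inr 2 \<in> f ` X \<longleftrightarrow> d \<in> X" by (rule img_iff[OF X h(4)])
      qed
      have cc: "\<not> (a \<in> X \<and> b \<in> X) \<Longrightarrow> \<not> (c \<in> X \<and> d \<in> X) \<Longrightarrow> card X \<le> 2"
        using cross4[OF X] card_le2 by metis
      show "X \<in> indep N \<longleftrightarrow> f ` X \<in> indep (direct_sum (uniform 1 2) (uniform 1 2))"
        unfolding iN[OF X] U2_indep pat_char[OF m p X] m1 using X s cc False by blast
    qed
    then show ?thesis using mn by blast
  qed
qed

lemma build_iso:
  assumes u: "ulc M L S K r"
  shows "matroid_iso M (direct_sum (direct_sum (uniform 0 (card L)) (uniform r (card S))) (uniform (card K) (card K)))"
proof -
  note p = ulc_part[OF u]
  have sub: "L \<subseteq> ground M" "S \<subseteq> ground M" "K \<subseteq> ground M" using p(5) by blast+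
  have fL: "finite L" "finite S" "finite K" using finite_subset[OF sub(1) p(1)] finite_subset[OF sub(2) p(1)] finite_subset[OF sub(3) p(1)] by simp_all
  obtain gL where gL: "bij_betw gL L {1..card L}" using finite_same_card_bij[OF fL(1), of "{1..card L}"] by auto
  obtain gS where gS: "bij_betw gS S {1..card S}" using finite_same_card_bij[OF fL(2), of "{1..card S}"] by auto
  obtain gK where gK: "bij_betw gK K {1..card K}" using finite_same_card_bij[OF fL(3), of "{1..card K}"] by auto
  define f where "f = (\<lambda>x. if x \<in> L then Inl (Inl (gL x)) else if x \<in> S then Inl (Inr (gS x)) else Inr (gK x))"
  have iL: "f ` L = Inl ` Inl ` {1..card L}"
  proof -
    have "f ` L = (\<lambda>x. Inl (Inl (gL x))) ` L" unfolding f_def by (rule image_cong) auto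
    also have "\<dots> = Inl ` Inl ` (gL ` L)" by (simp add: image_image)
    finally show ?thesis using bij_betw_imp_surj_on[OF gL] by simp
  qed
  have iS: "f ` S = Inl ` Inr ` {1..card S}"
  proof -
    have "f ` S = (\<lambda>x. Inl (Inr (gS x))) ` S" unfolding f_def using p(2) by (intro image_cong) auto
    also have "\<dots> = Inl ` Inr ` (gS ` S)" by (simp add: image_image)
    finally show ?thesis using bij_betw_imp_surj_on[OF gS] by simp
  qed
  have iK: "f ` K = Inr ` {1..card K}"
  proof -
    have "f ` K = (\<lambda>x. Inr (gK x)) ` K" unfolding f_def using p(3,4) by (intro image_cong) auto
    also have "\<dots> = Inr ` (gK ` K)" by (simp add: image_image)
    finally show ?thesis using bij_betw_imp_surj_on[OF gK] by simp
  qed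
  have injL: "inj_on gL L" "inj_on gS S" "inj_on gK K"
    using bij_betw_imp_inj_on[OF gL] bij_betw_imp_inj_on[OF gS] bij_betw_imp_inj_on[OF gK] by simp_all
  have fx: "x \<in> L \<Longrightarrow> f x = Inl (Inl (gL x))" "x \<in> S \<Longrightarrow> f x = Inl (Inr (gS x))"
     "x \<in> K \<Longrightarrow> f x = Inr (gK x)" for x
    unfolding f_def using p(2,3,4) by auto
  have inj: "inj_on f (ground M)"
  proof (rule inj_onI)
    fix x y assume xy: "x \<in> ground M" "y \<in> ground M" "f x = f y"
    have xs: "x \<in> L \<or> x \<in> S \<or> x \<in> K" "y \<in> L \<or> y \<in> S \<or> y \<in> K" using xy(1,2) p(5) by blast+
    show "x = y" using xs
    proof (elim disjE)
      assume "x \<in> L" "y \<in> L" then show ?thesis using xy(3) fx inj_onD[OF injL(1)] by simp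
    next
      assume "x \<in> S" "y \<in> S" then show ?thesis using xy(3) fx inj_onD[OF injL(2)] by simp
    next
      assume "x \<in> K" "y \<in> K" then show ?thesis using xy(3) fx inj_onD[OF injL(3)] by simp
    qed (use xy(3) fx in simp)+
  qed
  have im: "f ` ground M = ground (direct_sum (direct_sum (uniform 0 (card L)) (uniform r (card S))) (uniform (card K) (card K)))"
    unfolding form_ground p(5)[symmetric] image_Un iL iS iK ..
  have bij: "bij_betw f (ground M) (ground (direct_sum (direct_sum (uniform 0 (card L)) (uniform r (card S))) (uniform (card K) (card K))))"
    unfolding bij_betw_def using inj im by blast
  show ?thesis by (rule ulc_iso[OF u form_ulc bij iL iS])
qed

theorem proposition4p9:
  fixes M :: "'a matroid"
  assumes "matroid M"
  shows "(\<exists>m r s l. r \<le> s \<and>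
            matroid_iso M (direct_sum (direct_sum (uniform 0 m) (uniform r s)) (uniform l l)))
         \<longleftrightarrow>
         (\<not> (\<exists>N. is_minor N M \<and> matroid_iso N (minimal_matroid 2 4)) \<and>
          \<not> (\<exists>N. is_minor N M \<and> matroid_iso N (direct_sum (uniform 1 2) (uniform 1 2))))"
proof
  assume "\<exists>m r s l. r \<le> s \<and> matroid_iso M (direct_sum (direct_sum (uniform 0 m) (uniform r s)) (uniform l l))"
  then obtain m r s l where iso: "matroid_iso M (direct_sum (direct_sum (uniform 0 m) (uniform r s)) (uniform l l))"
    by blast
  from ulc_transport[OF assms iso form_ulc] obtain L S K where u: "ulc M L S K r" by (elim exE)
  have mu: "\<exists>L S K r. ulc N L S K r" if mN: "is_minor N M" for N
  proof -
    from mN obtain C D where CD: "C \<subseteq> ground M" "D \<subseteq> ground M" "C \<inter> D = {}" "N = minor_by M C D"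
      unfolding is_minor_def by (elim exE conjE) (rule that; assumption)
    have "ulc (minor_by M C D) (L - C - D) (S - C - D) (K - C - D) (r - card (C \<inter> S))"
      by (rule ulc_minor[OF u CD(1,2,3)])
    then show ?thesis unfolding CD(4) by (intro exI)
  qed
  show "\<not> (\<exists>N. is_minor N M \<and> matroid_iso N (minimal_matroid 2 4)) \<and>
        \<not> (\<exists>N. is_minor N M \<and> matroid_iso N (direct_sum (uniform 1 2) (uniform 1 2)))"
  proof (intro conjI notI)
    assume "\<exists>N. is_minor N M \<and> matroid_iso N (minimal_matroid 2 4)"
    then obtain N where N: "is_minor N M" "matroid_iso N (minimal_matroid 2 4)" by blast
    obtain L' S' K' r' where "ulc N L' S' K' r'" using mu[OF N(1)] by blast
    then show False using ulc_noT24 N(2) by blast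
  next
    assume "\<exists>N. is_minor N M \<and> matroid_iso N (direct_sum (uniform 1 2) (uniform 1 2))"
    then obtain N where N: "is_minor N M" "matroid_iso N (direct_sum (uniform 1 2) (uniform 1 2))" by blast
    obtain L' S' K' r' where "ulc N L' S' K' r'" using mu[OF N(1)] by blast
    then show False using ulc_noU N(2) by blast
  qed
next
  assume nb: "\<not> (\<exists>N. is_minor N M \<and> matroid_iso N (minimal_matroid 2 4)) \<and>
          \<not> (\<exists>N. is_minor N M \<and> matroid_iso N (direct_sum (uniform 1 2) (uniform 1 2)))"
  show "\<exists>m r s l. r \<le> s \<and> matroid_iso M (direct_sum (direct_sum (uniform 0 m) (uniform r s)) (uniform l l))"
  proof (cases "\<forall>Y. Y \<subseteq> mid M \<and> card Y \<le> rk M (mid M) \<longrightarrow> Y \<in> indep M")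
    case True
    have u: "ulc M (lpset M) (mid M) (colpset M) (rk M (mid M))" by (rule claimA[OF assms True])
    obtain Y where Y: "Y \<subseteq> mid M" "Y \<in> indep M" "card Y = rk M (mid M)" using mrk_obt[OF assms, of "mid M"] by blast
    have "finite (mid M)" using finite_subset[OF mid_sub m_fin[OF assms]] .
    then have le: "rk M (mid M) \<le> card (mid M)" using card_mono[OF _ Y(1)] Y(3) by simp
    show ?thesis
      by (intro exI[of _ "card (lpset M)"] exI[of _ "rk M (mid M)"] exI[of _ "card (mid M)"]
          exI[of _ "card (colpset M)"] conjI le build_iso[OF u])
  next
    case False
    then obtain Y where "Y \<subseteq> mid M" "card Y \<le> rk M (mid M)" "Y \<notin> indep M" by blast
    then obtain I a b c d where "pat M I a b c d" using claimB[OF assms] by blast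
    then obtain N where N: "is_minor N M" "matroid_iso N (minimal_matroid 2 4) \<or> matroid_iso N (direct_sum (uniform 1 2) (uniform 1 2))"
      using pat_minor[OF assms] by blast
    show ?thesis
    proof (rule ccontr)
      show False using N(2)
      proof
        assume "matroid_iso N (minimal_matroid 2 4)" then show False using nb N(1) by blast
      next
        assume "matroid_iso N (direct_sum (uniform 1 2) (uniform 1 2))" then show False using nb N(1) by blast
      qed
    qed
  qed
qed

end
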